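(* Let $\alpha$ be a curve in $\mathbb{R}^3$ with nonzero curvature, let $\alpha_T$ be its tangent indicatrix, and let $\beta$ be an evolute-direction curve of $\alpha_T$ (an $X$-direction curve of $\alpha_T$ with $N_\beta=T_T$). Then: (i) $\alpha$ is a helix if and only if $\beta$ is a helix; (ii) $\alpha$ is a slant helix if and only if $\beta$ is a slant helix.
   Context: Let $\alpha:I\subset\mathbb{R}\to\mathbb{R}^3$ be a unit-speed curve with arc length $s$, curvature $\kappa>0$, torsion $\tau$ and Frenet frame $\{T,N,B\}$. The tangent indicatrix of $\alpha$ is the curve $\alpha_T=T$ on the unit sphere. Its arc length is $s_T=\int\kappa\,ds$. Its Frenet apparatus is $\{T_T,N_T,B_T,\kappa_T,\tau_T\}$, with $\frac{dT_T}{ds_T}=\kappa_TN_T$, $\frac{dN_T}{ds_T}=-\kappa_TT_T+\tau_TB_T$ and $\frac{dB_T}{ds_T}=-\tau_TN_T$. Let $x,y,z$ be real functions of $s_T$ with $x^2+y^2+z^2=1$, and set $X=xT_T+yN_T+zB_T$. An integral curve $\beta$ of $X$, meaning $d\beta/ds_T=X$, is an $X$-direction curve of $\alpha_T$. It is regarded as a unit-speed Frenet curve with frame $\{T_\beta=X,N_\beta,B_\beta\}$, curvature $\kappa_\beta>0$ and torsion $\tau_\beta$. $\beta$ is an evolute-direction curve of $\alpha_T$ if $N_\beta=T_T$. A curve with curvature $k>0$ and torsion $t$ is a helix if its unit tangent makes a constant angle with a fixed line; equivalently, $t/k$ is constant. It is a slant helix if its principal normal makes a constant angle with a fixed line; equivalently,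 $\frac{k^2}{(k^2+t^2)^{3/2}}(t/k)'$ is constant, where $'$ is the derivative with respect to arc length. *)

theory Defs
  imports "HOL-Analysis.Analysis"
begin

definition frenet_curve ::
  "real set \<Rightarrow> (real \<Rightarrow> real^3) \<Rightarrow> (real \<Rightarrow> real^3) \<Rightarrow> (real \<Rightarrow> real^3)
   \<Rightarrow> (real \<Rightarrow> real^3) \<Rightarrow> (real \<Rightarrow> real) \<Rightarrow> (real \<Rightarrow> real) \<Rightarrow> bool" where
  "frenet_curve I c T N B k t \<longleftrightarrow>
     is_interval I \<and> open I \<and>
     (\<forall>s\<in>I.
        norm (T s) = 1 \<and> norm (N s) = 1 \<and> T s \<bullet> N s = 0 \<and> B s = cross3 (T s) (N s) \<and>
        k s > 0 \<and>
        (c has_vector_derivative T s) (at s) \<and>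
        (T has_vector_derivative k s *\<^sub>R N s) (at s) \<and>
        (N has_vector_derivative (- k s *\<^sub>R T s + t s *\<^sub>R B s)) (at s) \<and>
        (B has_vector_derivative (- t s *\<^sub>R N s)) (at s))"

definition helix :: "real set \<Rightarrow> (real \<Rightarrow> real^3) \<Rightarrow> bool" where
  "helix I T \<longleftrightarrow> (\<exists>u c. norm u = 1 \<and> (\<forall>s\<in>I. T s \<bullet> u = c))"

definition slant_helix :: "real set \<Rightarrow> (real \<Rightarrow> real^3) \<Rightarrow> bool" where
  "slant_helix I N \<longleftrightarrow> (\<exists>u c. norm u = 1 \<and> (\<forall>s\<in>I. N s \<bullet> u = c))"

end

theory Submission
  imports Defs
begin

lemma inner_deriv:
  assumes "(T has_vector_derivative T') (at s)"
  shows "((\<lambda>s. T s \<bullet> u) has_real_derivative (T' \<bullet> u)) (at s)"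
  using bounded_linear.has_vector_derivative[OF bounded_linear_inner_left assms, of u]
  by (simp add: has_real_derivative_iff_has_vector_derivative)

lemma helix_iff_normal:
  assumes fc: "frenet_curve J c T N B k t"
  shows "helix J T \<longleftrightarrow> (\<exists>u. norm u = 1 \<and> (\<forall>s\<in>J. N s \<bullet> u = 0))"
proof
  assume "helix J T"
  then obtain u c0 where u: "norm u = 1" "\<forall>s\<in>J. T s \<bullet> u = c0" unfolding helix_def by blast
  have "\<forall>s\<in>J. N s \<bullet> u = 0"
  proof
    fix s assume s: "s \<in> J"
    have op: "open J" using fc unfolding frenet_curve_def by blast
    have d1: "((\<lambda>s. T s \<bullet> u) has_real_derivative ((k s *\<^sub>R N s) \<bullet> u)) (at s)"
      using fc s unfolding frenet_curve_def by (blast intro: inner_deriv)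
    have d2: "((\<lambda>s. T s \<bullet> u) has_real_derivative 0) (at s)"
    proof -
      have "((\<lambda>_. c0) has_real_derivative 0) (at s)" by simp
      then show ?thesis
        using has_field_derivative_transform_within_open[OF _ op s, of "\<lambda>_. c0" 0 "\<lambda>s. T s \<bullet> u"] u(2)
        by auto
    qed
    have "(k s *\<^sub>R N s) \<bullet> u = 0" using DERIV_unique[OF d1 d2] .
    moreover have "k s > 0" using fc s unfolding frenet_curve_def by blast
    ultimately show "N s \<bullet> u = 0" by simp
  qed
  with u show "\<exists>u. norm u = 1 \<and> (\<forall>s\<in>J. N s \<bullet> u = 0)" by blast
next
  assume "\<exists>u. norm u = 1 \<and> (\<forall>s\<in>J. N s \<bullet> u = 0)"
  then obtain u where u: "norm u = 1" "\<forall>s\<in>J. N s \<bullet> u = 0" by blast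
  have cv: "convex J" using fc unfolding frenet_curve_def by (simp add: is_interval_convex)
  have "\<exists>c0. \<forall>s\<in>J. T s \<bullet> u = c0"
  proof (rule has_field_derivative_zero_constant[OF cv])
    fix s assume s: "s \<in> J"
    have d1: "((\<lambda>s. T s \<bullet> u) has_real_derivative ((k s *\<^sub>R N s) \<bullet> u)) (at s)"
      using fc s unfolding frenet_curve_def by (blast intro: inner_deriv)
    then show "((\<lambda>s. T s \<bullet> u) has_real_derivative 0) (at s within J)"
      using u(2) s by (auto intro: has_field_derivative_at_within)
  qed
  with u show "helix J T" unfolding helix_def by blast
qed

theorem theorem4p7:
  fixes I :: "real set"
    and \<alpha> T N B :: "real \<Rightarrow> real^3" and \<kappa> \<tau> :: "real \<Rightarrow> real"
    and \<sigma> :: "real \<Rightarrow> real"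
    and \<alpha>T TT NT BT :: "real \<Rightarrow> real^3" and \<kappa>T \<tau>T :: "real \<Rightarrow> real"
    and x y z :: "real \<Rightarrow> real"
    and \<beta> T\<beta> N\<beta> B\<beta> :: "real \<Rightarrow> real^3" and \<kappa>\<beta> \<tau>\<beta> :: "real \<Rightarrow> real"
  assumes alpha: "frenet_curve I \<alpha> T N B \<kappa> \<tau>"
    and arclen: "\<forall>s\<in>I. (\<sigma> has_real_derivative \<kappa> s) (at s)"
    and indicatrix: "\<forall>s\<in>I. \<alpha>T (\<sigma> s) = T s"
    and alphaT: "frenet_curve (\<sigma> ` I) \<alpha>T TT NT BT \<kappa>T \<tau>T"
    and xyz: "\<forall>u\<in>\<sigma> ` I. (x u)\<^sup>2 + (y u)\<^sup>2 + (z u)\<^sup>2 = 1"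
    and beta: "frenet_curve (\<sigma> ` I) \<beta> T\<beta> N\<beta> B\<beta> \<kappa>\<beta> \<tau>\<beta>"
    and X: "\<forall>u\<in>\<sigma> ` I. T\<beta> u = x u *\<^sub>R TT u + y u *\<^sub>R NT u + z u *\<^sub>R BT u"
    and evolute: "\<forall>u\<in>\<sigma> ` I. N\<beta> u = TT u"
  shows "(helix I T \<longleftrightarrow> helix (\<sigma> ` I) T\<beta>) \<and>
         (slant_helix I N \<longleftrightarrow> slant_helix (\<sigma> ` I) N\<beta>)"
proof -
  have key: "\<forall>s\<in>I. N\<beta> (\<sigma> s) = N s"
  proof
    fix s assume s: "s \<in> I"
    have op: "open I" using alpha unfolding frenet_curve_def by blast
    have ds: "(\<sigma> has_vector_derivative \<kappa> s) (at s)"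
      using arclen s by (simp add: has_real_derivative_iff_has_vector_derivative)
    have dT: "(\<alpha>T has_vector_derivative TT (\<sigma> s)) (at (\<sigma> s))"
      using alphaT s unfolding frenet_curve_def by blast
    have c: "((\<alpha>T \<circ> \<sigma>) has_vector_derivative (\<kappa> s *\<^sub>R TT (\<sigma> s))) (at s)"
      using vector_diff_chain_at[OF ds dT] .
    have c2: "(T has_vector_derivative (\<kappa> s *\<^sub>R TT (\<sigma> s))) (at s)"
      by (rule has_vector_derivative_transform_within_open[OF c op s]) (simp add: indicatrix)
    have dA: "(T has_vector_derivative (\<kappa> s *\<^sub>R N s)) (at s)" and kp: "\<kappa> s > 0"
      using alpha s unfolding frenet_curve_def by blast+
    have "\<kappa> s *\<^sub>R TT (\<sigma> s) = \<kappa> s *\<^sub>R N s" using vector_derivative_unique_at[OF c2 dA] .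
    then have "TT (\<sigma> s) = N s" using kp by simp
    then show "N\<beta> (\<sigma> s) = N s" using evolute s by simp
  qed
  have h1: "helix I T \<longleftrightarrow> (\<exists>u. norm u = 1 \<and> (\<forall>s\<in>I. N s \<bullet> u = 0))"
    by (rule helix_iff_normal[OF alpha])
  have h2: "helix (\<sigma> ` I) T\<beta> \<longleftrightarrow> (\<exists>u. norm u = 1 \<and> (\<forall>v\<in>\<sigma> ` I. N\<beta> v \<bullet> u = 0))"
    by (rule helix_iff_normal[OF beta])
  have "helix I T \<longleftrightarrow> helix (\<sigma> ` I) T\<beta>"
    unfolding h1 h2 using key by auto
  moreover have "slant_helix I N \<longleftrightarrow> slant_helix (\<sigma> ` I) N\<beta>"
    unfolding slant_helix_def using key by auto
  ultimately show ?thesis by blast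
qed

end
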